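(* Let $x\in\mathbb{R}$ and let $f:\mathbb{R}\to\mathbb{R}$ be analytic and nonzero on the closed interval between $0$ and $x$, with $f(0)=1$, and suppose $f(y)=\exp\big(\sum_{i=1}^{\infty}c_i y^i\big)$ for all $y$ in that interval, the series converging there; put $f_k(y)=\exp(c_k y^k)$. For $r>1$ and a finite nonempty $\mathcal{S}\subset\mathbb{N}^*$ define, for $n\ge|\mathcal{S}|$, \[ x_n(\mathcal{S},r,x)=\Big[\prod_{j\in\mathcal{S}}(r^j-1)^{1/j}\Big]\frac{x}{r^n},\qquad \mathcal{P}_f(\mathcal{S},r,x)=\prod_{n=|\mathcal{S}|}^{\infty}\Big[f\big(x_n(\mathcal{S},r,x)\big)\Big]^{\binom{n-1}{|\mathcal{S}|-1}}. \] Then for every positive integer $k$, \[ f_k(x)=\lim_{r\downarrow1}\ \frac{\prod_{\mathcal{S}_k:\ |\mathcal{S}_k|\text{ odd}}\mathcal{P}_f(\mathcal{S}_k,r,x)}{\prod_{\mathcal{S}_k:\ |\mathcal{S}_k|\text{ even}}\mathcal{P}_f(\mathcal{S}_k,r,x)}, \] where $\mathcal{S}_k$ ranges over the subsets of $\mathbb{N}^*$ whose largest element is $k$.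
   Context: $\mathbb{N}^*$ is the set of positive integers and $|\mathcal{S}|$ is the cardinality of $\mathcal{S}$. The $c_i$ are the Taylor coefficients at $0$ of $\log f$ and $f_k$ is called the $k$-th component of $f$. *)

theory Defs
  imports "HOL-Analysis.Analysis"
begin

definition real_analytic_on :: "(real \<Rightarrow> real) \<Rightarrow> real set \<Rightarrow> bool" where
  "real_analytic_on f A \<longleftrightarrow>
     (\<forall>a\<in>A. \<exists>e>0. \<exists>b::nat \<Rightarrow> real. \<forall>y. \<bar>y - a\<bar> < e \<longrightarrow> (\<lambda>n. b n * (y - a) ^ n) sums f y)"

definition component :: "(nat \<Rightarrow> real) \<Rightarrow> nat \<Rightarrow> real \<Rightarrow> real" where
  "component c k y = exp (c k * y ^ k)"

definition xn :: "nat set \<Rightarrow> real \<Rightarrow> real \<Rightarrow> nat \<Rightarrow> real" where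
  "xn S r x n = (\<Prod>j\<in>S. (r ^ j - 1) powr (1 / real j)) * x / r ^ n"

definition Pf :: "(real \<Rightarrow> real) \<Rightarrow> nat set \<Rightarrow> real \<Rightarrow> real \<Rightarrow> real" where
  "Pf f S r x = (\<Prod>m. f (xn S r x (m + card S)) ^ ((m + card S - 1) choose (card S - 1)))"

definition subsets_max :: "nat \<Rightarrow> nat set set" where
  "subsets_max k = {S. S \<subseteq> {1..k} \<and> k \<in> S}"

end

theory Submission
  imports Defs
begin


lemma negbin_sums:
  fixes t :: real and s :: nat
  assumes t: "0 \<le> t" "t < 1" and s: "s \<ge> 1"
  shows "(\<lambda>m. real ((m + s - 1) choose (s - 1)) * t ^ (m + s)) sums ((t / (1 - t)) ^ s)"
proof -
  have "\<bar>-t\<bar> < 1" using t by simp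
  from gen_binomial_real[OF this, of "- real s"]
  have 1: "(\<lambda>m. ((- real s) gchoose m) * (-t) ^ m) sums (1 + - t) powr (- real s)" .
  have eq: "((- real s) gchoose m) * (-t) ^ m = real ((m + s - 1) choose (s - 1)) * t ^ m" for m
  proof -
    have "((- real s) gchoose m) = (-1)^m * ((real m + real s - 1) gchoose m)"
      by (subst gbinomial_negated_upper) simp
    also have "real m + real s - 1 = real (m + s - 1)" using s by simp
    also have "(real (m + s - 1) gchoose m) = real ((m + s - 1) choose m)"
      by (simp add: binomial_gbinomial)
    also have "(m + s - 1) choose m = (m + s - 1) choose (s - 1)"
      using s by (metis add_diff_assoc binomial_symmetric le_add1 diff_add_inverse)
    finally have e: "((- real s) gchoose m) = (-1)^m * real ((m + s - 1) choose (s - 1))" .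
    have "(-1::real)^m * (-t)^m = t^m" by (simp flip: power_mult_distrib)
    then show ?thesis unfolding e by (metis mult.assoc mult.commute)
  qed
  have "(1 + - t) powr (- real s) = 1 / (1 - t) ^ s"
    using t by (simp add: powr_minus powr_realpow divide_inverse)
  with 1 eq have "(\<lambda>m. real ((m + s - 1) choose (s - 1)) * t ^ m) sums (1 / (1 - t) ^ s)" by simp
  from sums_mult2[OF this, of "t ^ s"]
  show ?thesis by (simp add: power_add mult_ac power_divide)
qed



lemma suminf_infsum_real:
  fixes g :: "nat \<Rightarrow> real"
  assumes "summable (\<lambda>n. norm (g n))"
  shows "infsum g UNIV = suminf g"
  using norm_summable_imp_has_sum[OF assms summable_sums[OF summable_norm_cancel[OF assms]]]
  by (rule infsumI)

lemma double_swap: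
  fixes a b :: "nat \<Rightarrow> nat \<Rightarrow> real"
  assumes ab: "\<And>m i. \<bar>a m i\<bar> \<le> b m i"
    and bs: "\<And>m. summable (b m)"
    and bss: "summable (\<lambda>m. suminf (b m))"
  shows "(\<And>m. summable (a m))" and "summable (\<lambda>m. suminf (a m))"
    and "\<And>i. summable (\<lambda>m. a m i)" and "summable (\<lambda>i. \<Sum>m. a m i)"
    and "(\<Sum>m. \<Sum>i. a m i) = (\<Sum>i. \<Sum>m. a m i)"
proof -
  have b0: "0 \<le> b m i" for m i using ab[of m i] by linarith
  have an: "summable (\<lambda>i. norm (a m i))" for m
    by (rule summable_comparison_test'[OF bs[of m]]) (use ab in auto)
  show as: "summable (a m)" for m using an by (rule summable_norm_cancel)
  have sn: "suminf (\<lambda>i. norm (a m i)) \<le> suminf (b m)" for m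
    by (intro suminf_le an bs) (use ab in auto)
  have abss: "(\<lambda>x. norm ((\<lambda>(m,i). a m i) x)) summable_on (UNIV \<times> UNIV)"
  proof (rule Infinite_Sum.abs_summable_on_Sigma_iff[THEN iffD2], intro conjI ballI)
    show "(\<lambda>z. norm ((\<lambda>y. (\<lambda>(m, i). a m i) (x, y)) z)) summable_on UNIV" for x
      using norm_summable_imp_summable_on[of "\<lambda>i. norm (a x i)"] an by simp
    have eq: "(\<Sum>\<^sub>\<infinity>y\<in>UNIV. norm ((\<lambda>(m, i). a m i) (x, y))) = suminf (\<lambda>i. norm (a x i))" for x
      using suminf_infsum_real[of "\<lambda>i. norm (a x i)"] an by simp
    have "summable (\<lambda>x. norm (suminf (\<lambda>i. norm (a x i))))"
    proof (rule summable_comparison_test'[OF bss])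
      fix n
      have "0 \<le> (\<Sum>i. norm (a n i))" by (rule suminf_nonneg) (use an in auto)
      then show "norm (norm (suminf (\<lambda>i. norm (a n i)))) \<le> suminf (b n)" using sn[of n] by simp
    qed
    then show "(\<lambda>z. norm ((\<lambda>x. \<Sum>\<^sub>\<infinity>y\<in>UNIV. norm ((\<lambda>(m, i). a m i) (x, y))) z)) summable_on UNIV"
      unfolding eq using norm_summable_imp_summable_on[of "\<lambda>x. norm (suminf (\<lambda>i. norm (a x i)))"]
      by simp
  qed
  hence summ: "(\<lambda>(m,i). a m i) summable_on (UNIV \<times> UNIV)" by (rule abs_summable_summable)
  have sw: "infsum (\<lambda>m. infsum (\<lambda>i. a m i) UNIV) UNIV = infsum (\<lambda>i. infsum (\<lambda>m. a m i) UNIV) UNIV"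
    by (rule infsum_swap_banach[OF summ])
  have colabs: "summable (\<lambda>m. norm (a m i))" for i
  proof (rule summable_comparison_test'[OF bss])
    fix m
    have "norm (a m i) \<le> b m i" using ab by simp
    also have "b m i \<le> suminf (b m)" using sum_le_suminf[OF bs[of m], of "{i}"] b0[of m] by (simp add: b0)
    finally show "norm (norm (a m i)) \<le> suminf (b m)" by simp
  qed
  show "summable (\<lambda>m. a m i)" for i using colabs by (rule summable_norm_cancel)
  have Hs: "summable (\<lambda>i. \<Sum>m. norm (a m i))"
  proof (rule bounded_imp_summable)
    show "0 \<le> (\<Sum>m. norm (a m i))" for i by (rule suminf_nonneg) (use colabs in auto)
    fix N
    have "(\<Sum>i\<le>N. \<Sum>m. norm (a m i)) = (\<Sum>m. \<Sum>i\<le>N. norm (a m i))"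
      by (rule suminf_sum[symmetric]) (use colabs in auto)
    also have "\<dots> \<le> (\<Sum>m. suminf (b m))"
    proof (rule suminf_le[OF _ _ bss])
      show "summable (\<lambda>m. \<Sum>i\<le>N. norm (a m i))" by (rule summable_sum) (use colabs in auto)
      fix m
      have "(\<Sum>i\<le>N. norm (a m i)) \<le> (\<Sum>i. norm (a m i))"
        by (rule sum_le_suminf) (use an in auto)
      also have "\<dots> \<le> suminf (b m)" by (rule sn)
      finally show "(\<Sum>i\<le>N. norm (a m i)) \<le> suminf (b m)" .
    qed
    finally show "(\<Sum>i\<le>N. \<Sum>m. norm (a m i)) \<le> (\<Sum>m. suminf (b m))" .
  qed
  have h1: "summable (\<lambda>i. norm (\<Sum>m. a m i))"
  proof (rule summable_comparison_test'[OF Hs])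
    fix n show "norm (norm (\<Sum>m. a m n)) \<le> (\<Sum>m. norm (a m n))"
      using summable_norm[OF colabs[of n]] by simp
  qed
  show "summable (\<lambda>i. \<Sum>m. a m i)" using h1 by (rule summable_norm_cancel)
  have h2: "summable (\<lambda>m. norm (suminf (a m)))"
  proof (rule summable_comparison_test'[OF bss])
    fix n show "norm (norm (suminf (a n))) \<le> suminf (b n)"
      using summable_norm[OF an[of n]] sn[of n] by simp
  qed
  show "summable (\<lambda>m. suminf (a m))" using h2 by (rule summable_norm_cancel)
  have e1: "infsum (\<lambda>i. a m i) UNIV = suminf (a m)" for m
    using suminf_infsum_real[OF an[of m]] by simp
  have e2: "infsum (\<lambda>m. a m i) UNIV = (\<Sum>m. a m i)" for i
    using suminf_infsum_real[OF colabs[of i]] by simp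
  have "(\<Sum>m. \<Sum>i. a m i) = infsum (\<lambda>m. infsum (\<lambda>i. a m i) UNIV) UNIV"
    unfolding e1 using suminf_infsum_real[OF h2] by simp
  also have "\<dots> = infsum (\<lambda>i. infsum (\<lambda>m. a m i) UNIV) UNIV" by (rule sw)
  also have "\<dots> = (\<Sum>i. \<Sum>m. a m i)"
    unfolding e2 using suminf_infsum_real[OF h1] by simp
  finally show "(\<Sum>m. \<Sum>i. a m i) = (\<Sum>i. \<Sum>m. a m i)" .
qed


lemma Pf_exp:
  fixes f :: "real \<Rightarrow> real" and d :: "nat \<Rightarrow> real"
  assumes fL: "\<And>\<rho>. 0 \<le> \<rho> \<Longrightarrow> \<rho> \<le> 1 \<Longrightarrow> f (x * \<rho>) = exp (\<Sum>i. d i * \<rho> ^ Suc i)"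
    and M: "\<And>i. \<bar>d i\<bar> \<le> M"
    and r: "r > 1" and S: "finite S" "S \<noteq> {}" "\<And>j. j \<in> S \<Longrightarrow> j \<ge> 1"
  defines "A \<equiv> (\<Prod>j\<in>S. (r ^ j - 1) powr (1 / real j))"
  shows "summable (\<lambda>i. d i * (A ^ Suc i / (r ^ Suc i - 1) ^ card S))"
    and "Pf f S r x = exp (\<Sum>i. d i * (A ^ Suc i / (r ^ Suc i - 1) ^ card S))"
proof -
  define s where "s = card S"
  have s1: "s \<ge> 1" using S by (simp add: s_def Suc_le_eq card_gt_0_iff)
  have gpos: "0 < (r ^ j - 1) powr (1 / real j)" if "j \<in> S" for j
  proof -
    have "r ^ j > 1" using S(3)[OF that] r by (intro one_less_power) auto
    then show ?thesis by simp
  qed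
  have glt: "(r ^ j - 1) powr (1 / real j) < r" if "j \<in> S" for j
  proof -
    have j: "j \<ge> 1" using S(3)[OF that] .
    have "(r ^ j - 1) powr (1 / real j) < (r ^ j) powr (1 / real j)"
      using j r by (intro powr_less_mono2) (auto simp: one_less_power)
    also have "\<dots> = r" using j r by (simp add: powr_realpow[symmetric] powr_powr)
    finally show ?thesis .
  qed
  have Apos: "A > 0" unfolding A_def using gpos by (intro prod_pos) auto
  obtain j0 where j0: "j0 \<in> S" using S by auto
  have Alt: "A < r ^ s" unfolding A_def s_def
    using prod_mono_strict[of j0 S "\<lambda>j. (r ^ j - 1) powr (1 / real j)" "\<lambda>_. r", OF j0 glt[OF j0] S(1)] gpos glt r
    by (auto simp: less_imp_le)
  define \<rho> where "\<rho> m = A / r ^ (m + s)" for m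
  define \<rho>0 where "\<rho>0 = A / r ^ s"
  have \<rho>pos: "0 < \<rho> m" for m using Apos r by (simp add: \<rho>_def)
  have \<rho>le: "\<rho> m \<le> \<rho>0" for m using Apos r
    by (auto simp: \<rho>_def \<rho>0_def intro!: divide_left_mono power_increasing)
  have \<rho>0lt: "\<rho>0 < 1" using Alt r by (simp add: \<rho>0_def)
  have \<rho>lt: "\<rho> m < 1" for m using \<rho>le[of m] \<rho>0lt by simp
  define bin where "bin m = real ((m + s - 1) choose (s - 1))" for m
  have bin0: "bin m \<ge> 0" for m by (simp add: bin_def)
  define a where "a m i = bin m * (d i * \<rho> m ^ Suc i)" for m i
  define b where "b m i = bin m * (M * \<rho> m ^ Suc i)" for m i
  have M0: "M \<ge> 0" using M[of 0] by linarith
  have ab: "\<bar>a m i\<bar> \<le> b m i" for m i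
  proof -
    have "\<bar>d i * \<rho> m ^ Suc i\<bar> \<le> M * \<rho> m ^ Suc i"
      using M[of i] \<rho>pos[of m] by (simp add: abs_mult mult_right_mono)
    then show ?thesis unfolding a_def b_def using bin0[of m]
      by (simp add: abs_mult mult_left_mono)
  qed
  have geo: "(\<lambda>i. \<rho> m ^ Suc i) sums (\<rho> m / (1 - \<rho> m))" for m
    using sums_mult[OF geometric_sums[of "\<rho> m"], of "\<rho> m"] \<rho>pos[of m] \<rho>lt[of m]
    by (simp add: divide_inverse)
  have bsums: "b m sums (bin m * M * (\<rho> m / (1 - \<rho> m)))" for m
    unfolding b_def using sums_mult[OF geo[of m], of "bin m * M"] by (simp add: mult_ac)
  have bs: "summable (b m)" for m using bsums by (rule sums_summable)
  have bss: "summable (\<lambda>m. suminf (b m))"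
  proof -
    have t: "0 \<le> 1 / r" "1 / r < 1" using r by auto
    have "summable (\<lambda>m. bin m * (1 / r) ^ (m + s))"
      using sums_summable[OF negbin_sums[OF t s1]] by (simp add: bin_def)
    hence "summable (\<lambda>m. (M * A / (1 - \<rho>0)) * (bin m * (1 / r) ^ (m + s)))"
      by (rule summable_mult)
    then show ?thesis
    proof (rule summable_comparison_test'[where N=0])
      fix m
      have "suminf (b m) = bin m * M * (\<rho> m / (1 - \<rho> m))" using bsums sums_unique by metis
      also have "\<dots> \<le> bin m * M * (\<rho> m / (1 - \<rho>0))"
        using bin0 M0 \<rho>pos[of m] \<rho>le[of m] \<rho>0lt
        by (intro mult_left_mono divide_left_mono) (auto intro: mult_nonneg_nonneg mult_pos_pos)
      also have "\<dots> = (M * A / (1 - \<rho>0)) * (bin m * (1 / r) ^ (m + s))"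
        by (simp add: \<rho>_def power_one_over field_simps)
      finally have le: "suminf (b m) \<le> (M * A / (1 - \<rho>0)) * (bin m * (1 / r) ^ (m + s))" .
      have "0 \<le> suminf (b m)" using bsums sums_unique bin0 M0 \<rho>pos[of m] \<rho>lt[of m]
        by (metis diff_gt_0_iff_gt divide_nonneg_pos less_imp_le mult_nonneg_nonneg)
      then show "norm (suminf (b m)) \<le> (M * A / (1 - \<rho>0)) * (bin m * (1 / r) ^ (m + s))"
        using le by simp
    qed
  qed
  note DS = double_swap[of a b, OF ab bs bss]
  have col: "(\<Sum>m. a m i) = d i * (A ^ Suc i / (r ^ Suc i - 1) ^ s)" for i
  proof -
    define t where "t = 1 / r ^ Suc i"
    have rp: "r ^ Suc i > 1" using r by (intro one_less_power) auto
    have t: "0 \<le> t" "t < 1" using r rp by (auto simp: t_def)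
    have eqa: "a m i = (d i * A ^ Suc i) * (bin m * t ^ (m + s))" for m
      by (simp add: a_def \<rho>_def t_def power_divide power_one_over field_simps flip: power_mult)
    have "(\<lambda>m. a m i) sums ((d i * A ^ Suc i) * (t / (1 - t)) ^ s)"
      unfolding eqa using sums_mult[OF negbin_sums[OF t s1]] by (simp add: bin_def)
    moreover have "t / (1 - t) = 1 / (r ^ Suc i - 1)"
      using rp r by (simp add: t_def field_simps)
    ultimately show ?thesis by (simp add: sums_iff power_one_over divide_inverse mult_ac power_inverse)
  qed
  have Ls: "summable (\<lambda>i. d i * \<rho> m ^ Suc i)" for m
  proof (rule summable_comparison_test'[OF sums_summable[OF sums_mult[OF geo[of m], of M]], where N=0])
    fix n
    have "\<bar>d n * \<rho> m ^ Suc n\<bar> \<le> M * \<rho> m ^ Suc n"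
      using M[of n] \<rho>pos[of m] by (simp add: abs_mult mult_right_mono)
    then show "norm (d n * \<rho> m ^ Suc n) \<le> M * \<rho> m ^ Suc n" by simp
  qed
  have row: "(\<Sum>i. a m i) = bin m * (\<Sum>i. d i * \<rho> m ^ Suc i)" for m
    unfolding a_def by (rule suminf_mult[OF Ls])
  show "summable (\<lambda>i. d i * (A ^ Suc i / (r ^ Suc i - 1) ^ card S))"
    using DS(4) by (simp add: col s_def)
  have fac: "f (xn S r x (m + card S)) ^ ((m + card S - 1) choose (card S - 1))
        = exp (bin m * (\<Sum>i. d i * \<rho> m ^ Suc i))" for m
  proof -
    have "xn S r x (m + card S) = x * \<rho> m"
      by (simp add: xn_def A_def[symmetric] \<rho>_def s_def)
    then show ?thesis using fL[of "\<rho> m"] \<rho>pos[of m] \<rho>lt[of m]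
      by (simp add: bin_def s_def exp_of_nat_mult)
  qed
  have "Pf f S r x = prodinf (\<lambda>m. exp (bin m * (\<Sum>i. d i * \<rho> m ^ Suc i)))"
    unfolding Pf_def fac ..
  also have "\<dots> = exp (\<Sum>m. bin m * (\<Sum>i. d i * \<rho> m ^ Suc i))"
    using DS(2) by (intro prodinf_exp) (simp add: row)
  also have "(\<Sum>m. bin m * (\<Sum>i. d i * \<rho> m ^ Suc i)) = (\<Sum>m. \<Sum>i. a m i)"
    by (simp add: row)
  also have "\<dots> = (\<Sum>i. \<Sum>m. a m i)" by (rule DS(5))
  finally show "Pf f S r x = exp (\<Sum>i. d i * (A ^ Suc i / (r ^ Suc i - 1) ^ card S))"
    by (simp add: col s_def)
qed



lemma subsets_max_alt: "subsets_max k = insert k ` Pow {1..<k}" if "k \<ge> 1"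
proof
  show "subsets_max k \<subseteq> insert k ` Pow {1..<k}"
  proof
    fix S assume "S \<in> subsets_max k"
    hence S: "S \<subseteq> {1..k}" "k \<in> S" by (auto simp: subsets_max_def)
    hence "S = insert k (S - {k})" "S - {k} \<subseteq> {1..<k}" by auto
    thus "S \<in> insert k ` Pow {1..<k}" by blast
  qed
  show "insert k ` Pow {1..<k} \<subseteq> subsets_max k"
    using that by (auto simp: subsets_max_def)
qed

lemma finite_subsets_max: "finite (subsets_max k)"
  by (rule finite_subset[of _ "Pow {1..k}"]) (auto simp: subsets_max_def)

lemma alt_sum:
  fixes w :: "nat \<Rightarrow> real"
  assumes k: "k \<ge> 1"
  shows "(\<Sum>S\<in>subsets_max k. (-1) ^ (card S + 1) * prod w S) = w k * (\<Prod>j\<in>{1..<k}. 1 - w j)"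
proof -
  have inj: "inj_on (insert k) (Pow {1..<k})"
    by (rule inj_onI) (auto, (metis atLeastLessThan_iff insert_iff less_irrefl subsetD insert_absorb insert_ident)+)
  have "(\<Sum>S\<in>subsets_max k. (-1) ^ (card S + 1) * prod w S)
      = (\<Sum>T\<in>Pow {1..<k}. (-1) ^ (card (insert k T) + 1) * prod w (insert k T))"
    unfolding subsets_max_alt[OF k] by (subst sum.reindex[OF inj]) simp
  also have "\<dots> = (\<Sum>T\<in>Pow {1..<k}. w k * prod (\<lambda>j. - w j) T)"
  proof (rule sum.cong[OF refl])
    fix T assume T: "T \<in> Pow {1..<k}"
    hence fin: "finite T" and nk: "k \<notin> T" by (auto intro: finite_subset)
    have "prod (\<lambda>j. - w j) T = (-1) ^ card T * prod w T"
      by (rule prod_uminus)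
    then show "(-1) ^ (card (insert k T) + 1) * prod w (insert k T) = w k * prod (\<lambda>j. - w j) T"
      using fin nk by simp
  qed
  also have "\<dots> = w k * (\<Sum>T\<in>Pow {1..<k}. prod (\<lambda>j. - w j) T * prod (\<lambda>_. 1) ({1..<k} - T))"
    by (simp add: sum_distrib_left)
  also have "(\<Sum>T\<in>Pow {1..<k}. prod (\<lambda>j. - w j) T * prod (\<lambda>_. 1) ({1..<k} - T)) = (\<Prod>j\<in>{1..<k}. - w j + 1)"
    by (rule prod_add[symmetric]) simp
  finally show ?thesis by simp
qed



definition ww :: "real \<Rightarrow> nat \<Rightarrow> nat \<Rightarrow> real" where
  "ww r n j = (r ^ j - 1) powr (real n / real j) / (r ^ n - 1)"

lemma powr_split: "(x::real) > 0 \<Longrightarrow> x powr a = x * x powr (a - 1)"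
proof -
  assume x: "x > 0"
  have "x powr a = x powr (1 + (a - 1))" by simp
  also have "\<dots> = x powr 1 * x powr (a - 1)" by (rule powr_add)
  finally show ?thesis using x by simp
qed

lemma powr_superadd:
  fixes y p :: real
  assumes "y \<ge> 0" "p \<ge> 1"
  shows "y powr p + 1 \<le> (y + 1) powr p"
proof -
  have a: "(y + 1) powr p = (y + 1) * (y + 1) powr (p - 1)"
    using assms by (intro powr_split) auto
  have b: "y powr p = y * y powr (p - 1)"
  proof (cases "y = 0")
    case True thus ?thesis using assms by simp
  next
    case False thus ?thesis using assms by (intro powr_split) auto
  qed
  have c: "y powr (p - 1) \<le> (y + 1) powr (p - 1)" using assms by (intro powr_mono2) auto
  have d: "1 \<le> (y + 1) powr (p - 1)" using assms by (intro ge_one_powr_ge_zero) auto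
  have "y * y powr (p - 1) \<le> y * (y + 1) powr (p - 1)" using c assms by (intro mult_left_mono) auto
  then show ?thesis unfolding a b using d by (simp add: algebra_simps)
qed

lemma rpow_gt1: "r > 1 \<Longrightarrow> j \<ge> 1 \<Longrightarrow> r ^ j > (1::real)"
  by (intro one_less_power) auto

lemma ww_nonneg: "r > 1 \<Longrightarrow> j \<ge> 1 \<Longrightarrow> n \<ge> 1 \<Longrightarrow> 0 \<le> ww r n j"
  using rpow_gt1[of r n] by (simp add: ww_def)

lemma ww_le1:
  assumes r: "r > 1" and j: "1 \<le> j" "j \<le> n"
  shows "ww r n j \<le> 1"
proof -
  have n: "n \<ge> 1" using j by simp
  have y: "r ^ j - 1 \<ge> 0" using rpow_gt1[OF r j(1)] by simp
  have p: "real n / real j \<ge> 1" using j by simp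
  have "(r ^ j - 1) powr (real n / real j) + 1 \<le> (r ^ j - 1 + 1) powr (real n / real j)"
    by (rule powr_superadd[OF y p])
  also have "\<dots> = r ^ n" using r j
    by (simp add: powr_realpow[symmetric] powr_powr)
  finally show ?thesis using rpow_gt1[OF r n] by (simp add: ww_def)
qed

lemma ww_diag: "r > 1 \<Longrightarrow> n \<ge> 1 \<Longrightarrow> ww r n n = 1"
proof -
  assume "r > 1" "n \<ge> 1"
  then have "r ^ n > 1" by (rule rpow_gt1)
  then show ?thesis by (simp add: ww_def)
qed

lemma ww_small:
  assumes r: "r > 1" and j: "1 \<le> j" "j < k"
  shows "ww r k j \<le> (r ^ j - 1) powr (real k / real j - 1)"
proof -
  have u: "r ^ j - 1 > 0" using rpow_gt1[OF r j(1)] by simp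
  have le: "r ^ j - 1 \<le> r ^ k - 1" using r j by (simp add: power_increasing)
  have "(r ^ j - 1) powr (real k / real j) = (r ^ j - 1) * (r ^ j - 1) powr (real k / real j - 1)"
    using u by (rule powr_split)
  also have "\<dots> \<le> (r ^ k - 1) * (r ^ j - 1) powr (real k / real j - 1)"
    using le by (intro mult_right_mono) auto
  finally show ?thesis using u le by (simp add: ww_def divide_le_eq mult.commute)
qed

lemma ww_big:
  assumes r: "r > 1" and k: "1 \<le> k" "k \<le> n"
  shows "ww r n k \<le> ((r ^ k - 1) powr (1 / real k)) ^ (n - k)"
proof -
  have u: "r ^ k - 1 > 0" using rpow_gt1[OF r k(1)] by simp
  have le: "r ^ k - 1 \<le> r ^ n - 1" using r k by (simp add: power_increasing)
  have "((r ^ k - 1) powr (1 / real k)) ^ (n - k) = (r ^ k - 1) powr (real (n - k) / real k)"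
    using u by (simp add: powr_realpow[symmetric] powr_powr)
  moreover have "(r ^ k - 1) powr (real n / real k) = (r ^ k - 1) * (r ^ k - 1) powr (real (n - k) / real k)"
    using powr_split[OF u, of "real n / real k"] k by (simp add: of_nat_diff diff_divide_distrib)
  ultimately have eq: "(r ^ k - 1) powr (real n / real k) = (r ^ k - 1) * ((r ^ k - 1) powr (1 / real k)) ^ (n - k)"
    by simp
  have "(r ^ k - 1) * ((r ^ k - 1) powr (1 / real k)) ^ (n - k) \<le> (r ^ n - 1) * ((r ^ k - 1) powr (1 / real k)) ^ (n - k)"
    using le by (intro mult_right_mono) auto
  then show ?thesis using u le by (simp add: ww_def eq divide_le_eq mult.commute)
qed



lemma ww_to0:
  assumes j: "1 \<le> j" "j < k"
  shows "((\<lambda>r. ww r k j) \<longlongrightarrow> 0) (at_right 1)"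
proof (rule Lim_null_comparison)
  show "\<forall>\<^sub>F r in at_right 1. norm (ww r k j) \<le> (r ^ j - 1) powr (real k / real j - 1)"
    using eventually_at_right_less[of "1::real"]
  proof eventually_elim
    case (elim r)
    then show ?case using ww_small[OF elim j] ww_nonneg[OF elim j(1), of k] j by simp
  qed
  have l: "((\<lambda>r::real. r ^ j - 1) \<longlongrightarrow> 1 ^ j - 1) (at_right 1)"
    by (intro tendsto_intros)
  show "((\<lambda>r. (r ^ j - 1) powr (real k / real j - 1)) \<longlongrightarrow> 0) (at_right 1)"
  proof (rule tendsto_zero_powrI)
    show "((\<lambda>r::real. r ^ j - 1) \<longlongrightarrow> 0) (at_right 1)" using l by simp
    show "((\<lambda>r::real. real k / real j - 1) \<longlongrightarrow> real k / real j - 1) (at_right 1)" by simp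
    show "\<forall>\<^sub>F r in at_right 1. 0 \<le> (r::real) ^ j - 1"
      using eventually_at_right_less[of "1::real"] by eventually_elim (simp add: one_le_power)
    show "0 < real k / real j - 1" using j by simp
  qed
qed

lemma main_limit:
  fixes d :: "nat \<Rightarrow> real"
  assumes M: "\<And>i. \<bar>d i\<bar> \<le> M" and k: "k \<ge> 1"
  shows "((\<lambda>r. \<Sum>i. d i * (ww r (Suc i) k * (\<Prod>j\<in>{1..<k}. 1 - ww r (Suc i) j))) \<longlongrightarrow> d (k - 1)) (at_right 1)"
proof -
  define G where "G r n = ww r n k * (\<Prod>j\<in>{1..<k}. 1 - ww r n j)" for r n
  define q where "q r = (r ^ k - 1) powr (1 / real k)" for r :: real
  define P where "P r = (\<Prod>j\<in>{1..<k}. 1 - ww r k j)" for r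
  define T where "T r = (\<Sum>i. d (i + k) * G r (Suc (i + k)))" for r
  have M0: "M \<ge> 0" using M[of 0] by linarith
  have ql: "(q \<longlongrightarrow> 0) (at_right 1)" unfolding q_def
  proof (rule tendsto_zero_powrI)
    have l: "((\<lambda>r::real. r ^ k - 1) \<longlongrightarrow> 1 ^ k - 1) (at_right 1)"
      by (intro tendsto_intros)
    show "((\<lambda>r::real. r ^ k - 1) \<longlongrightarrow> 0) (at_right 1)" using l by simp
    show "((\<lambda>r::real. 1 / real k) \<longlongrightarrow> 1 / real k) (at_right 1)" by simp
    show "\<forall>\<^sub>F r in at_right 1. 0 \<le> (r::real) ^ k - 1"
      using eventually_at_right_less[of "1::real"] by eventually_elim (simp add: one_le_power)
    show "0 < 1 / real k" using k by simp
  qed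
  have Pl: "(P \<longlongrightarrow> 1) (at_right 1)"
  proof -
    have "((\<lambda>r. \<Prod>j\<in>{1..<k}. 1 - ww r k j) \<longlongrightarrow> (\<Prod>j\<in>{1..<k}. 1 - 0)) (at_right 1)"
      by (intro tendsto_prod tendsto_diff tendsto_const ww_to0) auto
    then show ?thesis by (simp add: P_def[abs_def])
  qed
  have Gbound: "\<bar>G r n\<bar> \<le> q r ^ (n - k)" if r: "r > 1" and n: "n \<ge> k" for r n
  proof -
    have pr: "0 \<le> (\<Prod>j\<in>{1..<k}. 1 - ww r n j)" "(\<Prod>j\<in>{1..<k}. 1 - ww r n j) \<le> 1"
      using ww_nonneg[OF r] ww_le1[OF r] n by (auto intro!: prod_nonneg prod_le_1)
    have w0: "0 \<le> ww r n k" using ww_nonneg[OF r k] n k by simp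
    have "\<bar>G r n\<bar> = ww r n k * (\<Prod>j\<in>{1..<k}. 1 - ww r n j)" using pr w0 by (simp add: G_def)
    also have "\<dots> \<le> ww r n k" using pr w0 by (simp add: mult_left_le)
    also have "\<dots> \<le> q r ^ (n - k)" unfolding q_def by (rule ww_big[OF r k n])
    finally show ?thesis .
  qed
  have e2: "\<forall>\<^sub>F r in at_right 1. q r < 1/2" by (rule order_tendstoD(2)[OF ql]) simp
  have ev: "\<forall>\<^sub>F r in at_right 1. r > 1 \<and> q r < 1/2"
    using eventually_at_right_less[of "1::real"] e2 by eventually_elim auto
  have main: "(\<Sum>i. d i * G r (Suc i)) = d (k - 1) * P r + T r \<and> \<bar>T r\<bar> \<le> 2 * M * q r"
    if r: "r > 1" and qr: "q r < 1/2" for r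
  proof -
    have q0: "q r \<ge> 0" by (simp add: q_def)
    have tb: "\<bar>d (i + k) * G r (Suc (i + k))\<bar> \<le> M * q r * q r ^ i" for i
    proof -
      have "\<bar>d (i + k) * G r (Suc (i + k))\<bar> \<le> M * q r ^ (Suc (i + k) - k)"
        unfolding abs_mult using M[of "i+k"] Gbound[OF r, of "Suc (i + k)"] M0
        by (intro mult_mono) auto
      then show ?thesis by simp
    qed
    have geo: "(\<lambda>i. M * q r * q r ^ i) sums (M * q r * (1 / (1 - q r)))"
      using q0 qr by (intro sums_mult geometric_sums) auto
    have tsum: "summable (\<lambda>i. d (i + k) * G r (Suc (i + k)))"
      by (rule summable_comparison_test'[OF sums_summable[OF geo], where N=0]) (use tb in simp)
    have "\<bar>T r\<bar> \<le> (\<Sum>i. \<bar>d (i + k) * G r (Suc (i + k))\<bar>)"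
      unfolding T_def by (rule summable_rabs[OF summable_comparison_test'[OF sums_summable[OF geo], where N=0]]) (use tb in simp)
    also have "\<dots> \<le> M * q r * (1 / (1 - q r))"
      using tb geo by (intro sums_le[OF _ summable_sums]) (auto intro: summable_comparison_test'[OF sums_summable[OF geo], where N=0])
    also have "\<dots> \<le> M * q r * 2"
    proof (rule mult_left_mono)
      show "1 / (1 - q r) \<le> 2" using qr by (simp add: field_simps)
      show "0 \<le> M * q r" using q0 M0 by simp
    qed
    also have "\<dots> = 2 * M * q r" by simp
    finally have Tb: "\<bar>T r\<bar> \<le> 2 * M * q r" .
    have full: "summable (\<lambda>i. d i * G r (Suc i))"
      using tsum summable_iff_shift[of "\<lambda>i. d i * G r (Suc i)" k] by (simp add: add.commute)
    obtain k' where k': "k = Suc k'" using k by (cases k) auto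
    have zero: "G r (Suc i) = 0" if "i < k'" for i
    proof -
      have "(\<Prod>j\<in>{1..<k}. 1 - ww r (Suc i) j) = 0"
        using that k' ww_diag[OF r, of "Suc i"] by (intro prod_zero) (auto intro!: bexI[of _ "Suc i"])
      then show ?thesis by (simp add: G_def)
    qed
    have h1: "(\<Sum>i<k. d i * G r (Suc i)) = (\<Sum>i<k'. d i * G r (Suc i)) + d k' * G r k"
      by (simp add: k')
    have h2: "(\<Sum>i<k'. d i * G r (Suc i)) = 0" by (rule sum.neutral) (simp add: zero)
    have h3: "G r k = P r" by (simp add: G_def P_def ww_diag[OF r k])
    have head: "(\<Sum>i<k. d i * G r (Suc i)) = d (k - 1) * P r"
      using h1 h2 h3 k' by simp
    have "(\<Sum>i. d i * G r (Suc i)) = T r + d (k - 1) * P r"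
      unfolding T_def using suminf_split_initial_segment[OF full, of k] head by (simp add: add.commute)
    then show ?thesis using Tb by simp
  qed
  have lim2: "((\<lambda>r. d (k - 1) * P r + T r) \<longlongrightarrow> d (k - 1) * 1 + 0) (at_right 1)"
  proof (intro tendsto_add tendsto_mult tendsto_const Pl)
    show "(T \<longlongrightarrow> 0) (at_right 1)"
    proof (rule Lim_null_comparison)
      show "\<forall>\<^sub>F r in at_right 1. norm (T r) \<le> 2 * M * q r"
        using ev by eventually_elim (use main in auto)
      show "((\<lambda>r. 2 * M * q r) \<longlongrightarrow> 0) (at_right 1)"
        using tendsto_mult[OF tendsto_const ql, of "2 * M"] by simp
    qed
  qed
  have "\<forall>\<^sub>F r in at_right 1. d (k - 1) * P r + T r = (\<Sum>i. d i * G r (Suc i))"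
    using ev by eventually_elim (use main in auto)
  from tendsto_cong[OF this] lim2 show ?thesis by (simp add: G_def)
qed



lemma A_ww:
  fixes r :: real
  assumes r: "r > 1" and S: "\<And>j. j \<in> S \<Longrightarrow> j \<ge> 1" and n: "n \<ge> 1"
  shows "(\<Prod>j\<in>S. (r ^ j - 1) powr (1 / real j)) ^ n / (r ^ n - 1) ^ card S = (\<Prod>j\<in>S. ww r n j)"
proof -
  have "(\<Prod>j\<in>S. (r ^ j - 1) powr (1 / real j)) ^ n = (\<Prod>j\<in>S. (r ^ j - 1) powr (real n / real j))"
    unfolding prod_power_distrib
  proof (rule prod.cong[OF refl])
    fix j assume "j \<in> S"
    hence "r ^ j - 1 > 0" using rpow_gt1[OF r S] by simp
    thus "((r ^ j - 1) powr (1 / real j)) ^ n = (r ^ j - 1) powr (real n / real j)"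
      by (simp add: powr_realpow[symmetric] powr_powr)
  qed
  then show ?thesis by (simp add: ww_def prod_dividef)
qed

lemma ratio_eq:
  fixes f :: "real \<Rightarrow> real" and d :: "nat \<Rightarrow> real"
  assumes fL: "\<And>\<rho>. 0 \<le> \<rho> \<Longrightarrow> \<rho> \<le> 1 \<Longrightarrow> f (x * \<rho>) = exp (\<Sum>i. d i * \<rho> ^ Suc i)"
    and M: "\<And>i. \<bar>d i\<bar> \<le> M"
    and r: "r > 1" and k: "k \<ge> 1"
  shows "(\<Prod>S\<in>{S\<in>subsets_max k. odd (card S)}. Pf f S r x) /
               (\<Prod>S\<in>{S\<in>subsets_max k. even (card S)}. Pf f S r x)
       = exp (\<Sum>i. d i * (ww r (Suc i) k * (\<Prod>j\<in>{1..<k}. 1 - ww r (Suc i) j)))"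
proof -
  define A where "A S = (\<Prod>j\<in>S. (r ^ j - 1) powr (1 / real j))" for S
  define L where "L S = (\<Sum>i. d i * (A S ^ Suc i / (r ^ Suc i - 1) ^ card S))" for S
  define MM where "MM = subsets_max k"
  have fin: "finite MM" by (simp add: MM_def finite_subsets_max)
  have Sprops: "finite S" "S \<noteq> {}" "\<And>j. j \<in> S \<Longrightarrow> j \<ge> 1" if "S \<in> MM" for S
    using that finite_subset[of S "{1..k}"] by (auto simp: MM_def subsets_max_def)
  have PfL: "Pf f S r x = exp (L S)" if "S \<in> MM" for S
    unfolding L_def A_def by (rule Pf_exp(2)[OF fL M r Sprops[OF that]])
  have Ls: "summable (\<lambda>i. d i * (A S ^ Suc i / (r ^ Suc i - 1) ^ card S))" if "S \<in> MM" for S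
    unfolding A_def by (rule Pf_exp(1)[OF fL M r Sprops[OF that]])
  have "(\<Prod>S\<in>{S\<in>MM. odd (card S)}. Pf f S r x) = exp (\<Sum>S\<in>{S\<in>MM. odd (card S)}. L S)"
    using fin by (simp add: exp_sum PfL)
  moreover have "(\<Prod>S\<in>{S\<in>MM. even (card S)}. Pf f S r x) = exp (\<Sum>S\<in>{S\<in>MM. even (card S)}. L S)"
    using fin by (simp add: exp_sum PfL)
  ultimately have rat: "(\<Prod>S\<in>{S\<in>MM. odd (card S)}. Pf f S r x) / (\<Prod>S\<in>{S\<in>MM. even (card S)}. Pf f S r x)
      = exp ((\<Sum>S\<in>{S\<in>MM. odd (card S)}. L S) - (\<Sum>S\<in>{S\<in>MM. even (card S)}. L S))"
    by (simp add: exp_diff)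
  have split: "(\<Sum>S\<in>MM. (-1) ^ (card S + 1) * L S) = (\<Sum>S\<in>{S\<in>MM. odd (card S)}. L S) - (\<Sum>S\<in>{S\<in>MM. even (card S)}. L S)"
  proof -
    have un: "MM = {S\<in>MM. odd (card S)} \<union> {S\<in>MM. even (card S)}" by auto
    have "(\<Sum>S\<in>MM. (-1) ^ (card S + 1) * L S) = (\<Sum>S\<in>{S\<in>MM. odd (card S)}. (-1) ^ (card S + 1) * L S) + (\<Sum>S\<in>{S\<in>MM. even (card S)}. (-1) ^ (card S + 1) * L S)"
      by (subst un, rule sum.union_disjoint) (use fin in auto)
    also have "(\<Sum>S\<in>{S\<in>MM. odd (card S)}. (-1) ^ (card S + 1) * L S) = (\<Sum>S\<in>{S\<in>MM. odd (card S)}. L S)"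
      by (rule sum.cong) auto
    also have "(\<Sum>S\<in>{S\<in>MM. even (card S)}. (-1) ^ (card S + 1) * L S) = (\<Sum>S\<in>{S\<in>MM. even (card S)}. - L S)"
      by (rule sum.cong) auto
    finally show ?thesis by (simp add: sum_negf)
  qed
  have "(\<Sum>S\<in>MM. (-1) ^ (card S + 1) * L S)
      = (\<Sum>S\<in>MM. \<Sum>i. (-1) ^ (card S + 1) * (d i * (A S ^ Suc i / (r ^ Suc i - 1) ^ card S)))"
    unfolding L_def by (intro sum.cong refl suminf_mult[symmetric] Ls)
  also have "\<dots> = (\<Sum>i. \<Sum>S\<in>MM. (-1) ^ (card S + 1) * (d i * (A S ^ Suc i / (r ^ Suc i - 1) ^ card S)))"
    by (rule suminf_sum[symmetric]) (intro summable_mult Ls)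
  also have "\<dots> = (\<Sum>i. d i * (ww r (Suc i) k * (\<Prod>j\<in>{1..<k}. 1 - ww r (Suc i) j)))"
  proof (rule suminf_cong)
    fix i
    have "(\<Sum>S\<in>MM. (-1) ^ (card S + 1) * (d i * (A S ^ Suc i / (r ^ Suc i - 1) ^ card S)))
        = d i * (\<Sum>S\<in>MM. (-1) ^ (card S + 1) * (\<Prod>j\<in>S. ww r (Suc i) j))"
      unfolding sum_distrib_left
    proof (intro sum.cong refl)
      fix S assume S: "S \<in> MM"
      have e: "A S ^ Suc i / (r ^ Suc i - 1) ^ card S = (\<Prod>j\<in>S. ww r (Suc i) j)"
        unfolding A_def by (rule A_ww[OF r Sprops(3)[OF S]]) auto
      show "(-1) ^ (card S + 1) * (d i * (A S ^ Suc i / (r ^ Suc i - 1) ^ card S))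
          = d i * ((-1) ^ (card S + 1) * (\<Prod>j\<in>S. ww r (Suc i) j))"
        unfolding e by (simp only: mult_ac)
    qed
    also have "\<dots> = d i * (ww r (Suc i) k * (\<Prod>j\<in>{1..<k}. 1 - ww r (Suc i) j))"
      unfolding MM_def using alt_sum[OF k, of "ww r (Suc i)"] by (simp only:)
    finally show "(\<Sum>S\<in>MM. (-1) ^ (card S + 1) * (d i * (A S ^ Suc i / (r ^ Suc i - 1) ^ card S)))
        = d i * (ww r (Suc i) k * (\<Prod>j\<in>{1..<k}. 1 - ww r (Suc i) j))" .
  qed
  finally show ?thesis using rat split by (simp add: MM_def)
qed



theorem lemma5:
  fixes f :: "real \<Rightarrow> real" and c :: "nat \<Rightarrow> real" and x :: real and k :: nat
  assumes analytic: "real_analytic_on f {min 0 x..max 0 x}"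
    and nonzero: "\<forall>y\<in>{min 0 x..max 0 x}. f y \<noteq> 0"
    and f0: "f 0 = 1"
    and series: "\<forall>y\<in>{min 0 x..max 0 x}.
                   summable (\<lambda>i. c (Suc i) * y ^ Suc i) \<and>
                   f y = exp (\<Sum>i. c (Suc i) * y ^ Suc i)"
    and kpos: "k > 0"
  shows "((\<lambda>r. (\<Prod>S\<in>{S\<in>subsets_max k. odd (card S)}. Pf f S r x) /
               (\<Prod>S\<in>{S\<in>subsets_max k. even (card S)}. Pf f S r x))
          \<longlongrightarrow> component c k x) (at_right 1)"
proof -
  define d where "d i = c (Suc i) * x ^ Suc i" for i
  have k: "k \<ge> 1" using kpos by simp
  have fL: "f (x * \<rho>) = exp (\<Sum>i. d i * \<rho> ^ Suc i)" if "0 \<le> \<rho>" "\<rho> \<le> 1" for \<rho>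
  proof -
    have "x * \<rho> \<in> {min 0 x..max 0 x}"
    proof (cases "x \<ge> 0")
      case True
      then show ?thesis using that by (auto intro: mult_left_le mult_nonneg_nonneg)
    next
      case False
      then show ?thesis using that
        by (auto simp: mult_le_0_iff intro: mult_left_le)
    qed
    then have "f (x * \<rho>) = exp (\<Sum>i. c (Suc i) * (x * \<rho>) ^ Suc i)" using series by blast
    also have "(\<lambda>i. c (Suc i) * (x * \<rho>) ^ Suc i) = (\<lambda>i. d i * \<rho> ^ Suc i)"
      by (rule ext) (simp only: d_def power_mult_distrib mult.assoc)
    finally show ?thesis .
  qed
  have "x \<in> {min 0 x..max 0 x}" by simp
  then have "summable (\<lambda>i. c (Suc i) * x ^ Suc i)" using series by blast
  then have "summable d" unfolding d_def[abs_def] .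
  then have "d \<longlonglongrightarrow> 0" by (rule summable_LIMSEQ_zero)
  then have "Bseq d" by (intro convergent_imp_Bseq convergentI)
  then obtain M where M: "\<And>i. \<bar>d i\<bar> \<le> M" by (rule BseqE) (metis real_norm_def)
  have lim: "((\<lambda>r. exp (\<Sum>i. d i * (ww r (Suc i) k * (\<Prod>j\<in>{1..<k}. 1 - ww r (Suc i) j))))
       \<longlongrightarrow> exp (d (k - 1))) (at_right 1)"
    by (intro tendsto_exp main_limit[OF M k])
  have "\<forall>\<^sub>F r in at_right 1. exp (\<Sum>i. d i * (ww r (Suc i) k * (\<Prod>j\<in>{1..<k}. 1 - ww r (Suc i) j)))
      = (\<Prod>S\<in>{S\<in>subsets_max k. odd (card S)}. Pf f S r x) /
               (\<Prod>S\<in>{S\<in>subsets_max k. even (card S)}. Pf f S r x)"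
    using eventually_at_right_less[of "1::real"]
    by eventually_elim (rule ratio_eq[OF fL M _ k, symmetric], auto)
  from tendsto_cong[OF this] lim
  have "((\<lambda>r. (\<Prod>S\<in>{S\<in>subsets_max k. odd (card S)}. Pf f S r x) /
               (\<Prod>S\<in>{S\<in>subsets_max k. even (card S)}. Pf f S r x)) \<longlongrightarrow> exp (d (k - 1))) (at_right 1)"
    by simp
  moreover have "exp (d (k - 1)) = component c k x"
    using k by (simp add: d_def component_def)
  ultimately show ?thesis by simp
qed


end
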